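(* Let $\mathcal{M}$ be a CTMC with $E(s)=1$ for all states $s$ and a unique absorbing goal state $g$; let $\delta>0$, $c=e^{\delta}$, $\mathcal{M}'=c\cdot\mathcal{M}$, $t\geq0$, and $N=\left\lceil\frac{(e^{\delta}-1)t}{\delta}\right\rceil$. Then $$\mathrm{Diff}_t(\mathcal{M}):=\left|\mathrm{Pr}^{\mathcal{M}'}(\lozenge^{\leq t}g)-\mathrm{Pr}^{\mathcal{M}}(\lozenge^{\leq t}g)\right|\leq\mathrm{Diff}_t(\mathcal{E}_N)=\sum_{k=0}^{N-1}\frac{t^k}{k!}\left(e^{-t}-c^ke^{-ct}\right).$$
   Context: In a CTMC the process stays in state $s$ an exponentially distributed time with rate $E(s)$ and then jumps to $s'$ with probability $P(s,s')$. $c\cdot\mathcal{M}$ is obtained by multiplying all exit rates by $c$. $\mathrm{Pr}^{\mathcal{M}}(\lozenge^{\leq t}g)$: probability of reaching $g$ from the initial state within time $t$. The Erlang CTMC $\mathcal{E}_N$ has states $s_0,\dots,s_{N-1},s_N=g$, initial state $s_0$ (only $g$ if $N=0$), all exit rates $1$, $P(s_i,s_{i+1})=1$ for $i<N$, $P(g,g)=1$, with $g$ labeled differently from the equally labeled $s_0,\dots,s_{N-1}$; $\mathrm{Diff}_t(\mathcal{E}_N)=|\mathrm{Pr}^{\mathcal{E}_N}(\lozenge^{\leq t}g)-\mathrm{Pr}^{c\cdot\mathcal{E}_N}(\lozenge^{\leq t}g)|$. *)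

theory Defs
  imports "HOL-Probability.Probability"
begin

text \<open>A CTMC is given by a finite state set S, exit rates E, and transition
probabilities P of the embedded jump chain. A finite path is a list of states
ss = [s_0, ..., s_k]; the process spends an exponentially distributed time with
rate E(s_i) in s_i (independently), then jumps.\<close>

definition hold_prob :: "('s \<Rightarrow> real) \<Rightarrow> 's list \<Rightarrow> real \<Rightarrow> real" where
  "hold_prob E ss t =
     (let k = length ss - 1;
          M = PiM {..<k} (\<lambda>i. density lborel (exponential_density (E (ss ! i))))
      in measure M {x \<in> space M. (\<Sum>i<k. x i) \<le> t})"

definition first_hit_paths :: "'s set \<Rightarrow> 's \<Rightarrow> 's \<Rightarrow> nat \<Rightarrow> 's list set" where
  "first_hit_paths S s0 g k =
     {ss. length ss = Suc k \<and> set ss \<subseteq> S \<and> hd ss = s0 \<and> last ss = g \<and> g \<notin> set (butlast ss)}"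

text \<open>Time-bounded reachability Pr(eventually-within-t g) from s0: the event is the disjoint
union over k of the cylinder sets "first hit g at jump k, and the k-th jump time is \<le> t".\<close>
definition ctmc_reach :: "'s set \<Rightarrow> ('s \<Rightarrow> real) \<Rightarrow> ('s \<Rightarrow> 's \<Rightarrow> real) \<Rightarrow> 's \<Rightarrow> 's \<Rightarrow> real \<Rightarrow> real" where
  "ctmc_reach S E P s0 g t =
     (\<Sum>k. \<Sum>ss\<in>first_hit_paths S s0 g k.
            (\<Prod>i<k. P (ss ! i) (ss ! Suc i)) * hold_prob E ss t)"

definition scale_rates :: "real \<Rightarrow> ('s \<Rightarrow> real) \<Rightarrow> 's \<Rightarrow> real" where
  "scale_rates c E = (\<lambda>s. c * E s)"

text \<open>Erlang CTMC E_N: states 0..N (state i = s_i, N = g), rates 1, initial state 0.\<close>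
definition erlang_P :: "nat \<Rightarrow> nat \<Rightarrow> nat \<Rightarrow> real" where
  "erlang_P N i j = (if i < N then (if j = Suc i then 1 else 0) else (if j = i then 1 else 0))"

definition erlang_diff :: "real \<Rightarrow> real \<Rightarrow> nat \<Rightarrow> real" where
  "erlang_diff c t N =
     \<bar>ctmc_reach {0..N} (\<lambda>_. 1) (erlang_P N) 0 N t
      - ctmc_reach {0..N} (scale_rates c (\<lambda>_. 1)) (erlang_P N) 0 N t\<bar>"

end

theory Submission
  imports Defs
begin


lemma PiM_exp_sum:
  fixes r t :: real and k :: nat
  assumes r: "r > 0" and t: "t \<ge> 0"
  defines "M \<equiv> PiM {..<k} (\<lambda>i. density lborel (exponential_density r))"
  shows "measure M {x \<in> space M. (\<Sum>i<k. x i) \<le> t} = 1 - (\<Sum>n<k. (r*t)^n * exp(-r*t) / fact n)"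
proof (cases "k = 0")
  case True
  then show ?thesis unfolding M_def by (simp add: PiM_empty t)
next
  case False
  let ?D = "density lborel (exponential_density r)"
  have pD: "prob_space ?D" using prob_space_exponential_density[OF r] .
  interpret product_prob_space "\<lambda>_. ?D" "{..<k}"
    by (intro product_prob_spaceI pD)
  interpret PM: prob_space M unfolding M_def by (rule prob_space_P) auto
  have comp: "distr M ?D (\<lambda>\<omega>. \<omega> i) = ?D" if "i < k" for i
    unfolding M_def using PiM_component[of i] that by simp
  have rv: "PM.random_variable borel (\<lambda>\<omega>. \<omega> i)" if "i \<in> {..<k}" for i
    using that unfolding M_def by measurable
  have ind: "PM.indep_vars (\<lambda>i. borel) (\<lambda>i \<omega>. \<omega> i) {..<k}"
  proof (subst PM.indep_vars_iff_distr_eq_PiM')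
    show "{..<k} \<noteq> {}" using False by auto
    show "\<And>i. i \<in> {..<k} \<Longrightarrow> PM.random_variable borel (\<lambda>\<omega>. \<omega> i)" by (rule rv)
    have sM: "sets M = sets (Pi\<^sub>M {..<k} (\<lambda>i. borel))"
      unfolding M_def by (rule sets_PiM_cong) simp_all
    have ext: "restrict (\<lambda>i. x i) {..<k} = x" if "x \<in> space M" for x
    proof -
      have "x \<in> extensional {..<k}" using that unfolding M_def space_PiM PiE_def by blast
      then show ?thesis by (simp add: extensional_restrict)
    qed
    have "distr M (Pi\<^sub>M {..<k} (\<lambda>i. borel)) (\<lambda>x. restrict (\<lambda>i. x i) {..<k}) = distr M M (\<lambda>x. x)"
      by (rule distr_cong[OF refl sM[symmetric] ext])
    also have "\<dots> = M" by (rule distr_id2) (rule refl)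
    also have "M = Pi\<^sub>M {..<k} (\<lambda>i. distr M borel (\<lambda>\<omega>. \<omega> i))"
      unfolding M_def
      apply (rule PiM_cong)
       apply simp
      apply (subst distr_cong[where L="?D"])
         apply (rule refl)
        apply simp
       apply (rule refl)
      using comp unfolding M_def by simp
    finally show "distr M (Pi\<^sub>M {..<k} (\<lambda>i. borel)) (\<lambda>x. restrict (\<lambda>i. x i) {..<k}) = Pi\<^sub>M {..<k} (\<lambda>i. distr M borel (\<lambda>\<omega>. \<omega> i))" .
  qed
  have dist: "distributed M lborel (\<lambda>\<omega>. \<omega> i) (exponential_density r)" if "i \<in> {..<k}" for i
    unfolding distributed_def
  proof (intro conjI)
    have "distr M lborel (\<lambda>\<omega>. \<omega> i) = distr M ?D (\<lambda>\<omega>. \<omega> i)"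
      by (rule distr_cong) auto
    also have "\<dots> = ?D" using comp that by simp
    finally show "distr M lborel (\<lambda>\<omega>. \<omega> i) = ?D" .
    show "(\<lambda>x. ennreal (exponential_density r x)) \<in> borel_measurable lborel" by measurable
    show "(\<lambda>\<omega>. \<omega> i) \<in> measurable M lborel" using rv[OF that] by simp
  qed
  have "distributed M lborel (\<lambda>x. \<Sum>i\<in>{..<k}. x i) (erlang_density (card {..<k} - 1) r)"
    by (rule PM.exponential_distributed_sum[OF _ _ r dist ind]) (use False in auto)
  then have "\<P>(x in M. (\<Sum>i\<in>{..<k}. x i) \<le> t) = erlang_CDF (k - 1) r t"
    using PM.erlang_distributed_le[OF _ r t] by simp
  also have "\<dots> = 1 - (\<Sum>n<k. (r*t)^n * exp(-r*t) / fact n)"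
    using False t unfolding erlang_CDF_def
    by (simp add: lessThan_Suc_atMost[symmetric])
  finally show ?thesis by simp
qed



definition fh :: "'s set \<Rightarrow> ('s \<Rightarrow> 's \<Rightarrow> real) \<Rightarrow> 's \<Rightarrow> nat \<Rightarrow> 's \<Rightarrow> real" where
  "fh S P g k s = (\<Sum>ss\<in>first_hit_paths S s g k. \<Prod>i<k. P (ss ! i) (ss ! Suc i))"

lemma fhp_finite: "finite S \<Longrightarrow> finite (first_hit_paths S s g k)"
  by (rule finite_subset[OF _ finite_lists_length_eq[of S "Suc k"]])
     (auto simp: first_hit_paths_def)

lemma fhp_0: "first_hit_paths S s g 0 = (if s \<in> S \<and> s = g then {[s]} else {})"
proof -
  have "ss \<in> first_hit_paths S s g 0 \<longleftrightarrow> s \<in> S \<and> s = g \<and> ss = [s]" for ss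
  proof
    assume "ss \<in> first_hit_paths S s g 0"
    then obtain x where "ss = [x]" "set ss \<subseteq> S" "hd ss = s" "last ss = g"
      unfolding first_hit_paths_def by (auto simp: length_Suc_conv)
    then show "s \<in> S \<and> s = g \<and> ss = [s]" by auto
  qed (auto simp: first_hit_paths_def)
  then show ?thesis by auto
qed

lemma fhp_Suc: "first_hit_paths S s g (Suc k) =
   (if s \<in> S \<and> s \<noteq> g then (\<Union>s'\<in>S. (\<lambda>ys. s # ys) ` first_hit_paths S s' g k) else {})"
proof -
  have "ss \<in> first_hit_paths S s g (Suc k) \<longleftrightarrow>
        s \<in> S \<and> s \<noteq> g \<and> (\<exists>s'\<in>S. \<exists>ys\<in>first_hit_paths S s' g k. ss = s # ys)" for ss
  proof
    assume A: "ss \<in> first_hit_paths S s g (Suc k)"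
    then obtain x ys where ss: "ss = x # ys" and len: "length ys = Suc k"
      unfolding first_hit_paths_def by (auto simp: length_Suc_conv)
    then have ne: "ys \<noteq> []" by auto
    from A ss ne have "x = s" "x \<in> S" "set ys \<subseteq> S" "last ys = g" "x \<noteq> g" "g \<notin> set (butlast ys)"
      unfolding first_hit_paths_def by auto
    moreover have "hd ys \<in> S" using ne \<open>set ys \<subseteq> S\<close> by (cases ys) auto
    ultimately show "s \<in> S \<and> s \<noteq> g \<and> (\<exists>s'\<in>S. \<exists>ys\<in>first_hit_paths S s' g k. ss = s # ys)"
      using ss len unfolding first_hit_paths_def by auto
  next
    assume "s \<in> S \<and> s \<noteq> g \<and> (\<exists>s'\<in>S. \<exists>ys\<in>first_hit_paths S s' g k. ss = s # ys)"
    then obtain s' ys where "s \<in> S" "s \<noteq> g" "s' \<in> S" "ys \<in> first_hit_paths S s' g k" "ss = s # ys"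
      by auto
    moreover then have "ys \<noteq> []" unfolding first_hit_paths_def by auto
    ultimately show "ss \<in> first_hit_paths S s g (Suc k)"
      unfolding first_hit_paths_def by auto
  qed
  note * = this
  show ?thesis
  proof (rule set_eqI)
    fix ss
    show "ss \<in> first_hit_paths S s g (Suc k) \<longleftrightarrow>
      ss \<in> (if s \<in> S \<and> s \<noteq> g then (\<Union>s'\<in>S. (\<lambda>ys. s # ys) ` first_hit_paths S s' g k) else {})"
    proof (cases "s \<in> S \<and> s \<noteq> g")
      case True then show ?thesis unfolding * if_P[OF True] by blast
    next
      case False then show ?thesis unfolding * if_not_P[OF False] by blast
    qed
  qed
qed

lemma fh_0: "fh S P g 0 s = (if s \<in> S \<and> s = g then 1 else 0)"
  by (auto simp add: fh_def fhp_0)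

lemma fh_Suc:
  assumes finS: "finite S"
  shows "fh S P g (Suc k) s = (if s \<in> S \<and> s \<noteq> g then (\<Sum>s'\<in>S. P s s' * fh S P g k s') else 0)"
proof (cases "s \<in> S \<and> s \<noteq> g")
  case True
  have hd: "ys ! 0 = s'" if "ys \<in> first_hit_paths S s' g k" for ys s'
    using that unfolding first_hit_paths_def by (cases ys) auto
  have "fh S P g (Suc k) s = (\<Sum>s'\<in>S. \<Sum>ss\<in>(\<lambda>ys. s # ys) ` first_hit_paths S s' g k.
            \<Prod>i<Suc k. P (ss ! i) (ss ! Suc i))"
    unfolding fh_def fhp_Suc using True
  proof (simp, intro sum.UNION_disjoint)
    show "finite S" by (rule finS)
    show "\<forall>i\<in>S. finite ((\<lambda>ys. s # ys) ` first_hit_paths S i g k)"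
      using fhp_finite[OF finS] by blast
    show "\<forall>i\<in>S. \<forall>j\<in>S. i \<noteq> j \<longrightarrow> (\<lambda>ys. s # ys) ` first_hit_paths S i g k \<inter> (\<lambda>ys. s # ys) ` first_hit_paths S j g k = {}"
    proof (intro ballI impI)
      fix i j assume "i \<in> S" "j \<in> S" "i \<noteq> j"
      show "(\<lambda>ys. s # ys) ` first_hit_paths S i g k \<inter> (\<lambda>ys. s # ys) ` first_hit_paths S j g k = {}"
      proof (rule ccontr)
        assume "(\<lambda>ys. s # ys) ` first_hit_paths S i g k \<inter> (\<lambda>ys. s # ys) ` first_hit_paths S j g k \<noteq> {}"
        then obtain y1 y2 where "y1 \<in> first_hit_paths S i g k" "y2 \<in> first_hit_paths S j g k" "s # y1 = s # y2"
          by blast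
        then show False using hd[of y1 i] hd[of y2 j] \<open>i \<noteq> j\<close> by simp
      qed
    qed
  qed
  also have "\<dots> = (\<Sum>s'\<in>S. \<Sum>ys\<in>first_hit_paths S s' g k.
            \<Prod>i<Suc k. P ((s # ys) ! i) ((s # ys) ! Suc i))"
    apply (rule sum.cong[OF refl])
    apply (subst sum.reindex)
     apply (simp add: inj_on_def)
    apply (simp add: o_def)
    done
  also have "\<dots> = (\<Sum>s'\<in>S. \<Sum>ys\<in>first_hit_paths S s' g k.
            P s s' * (\<Prod>i<k. P (ys ! i) (ys ! Suc i)))"
    by (intro sum.cong refl, subst prod.lessThan_Suc_shift) (simp add: hd)
  also have "\<dots> = (\<Sum>s'\<in>S. P s s' * fh S P g k s')"
    by (simp add: fh_def sum_distrib_left)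
  finally show ?thesis using True by simp
next
  case False
  have "first_hit_paths S s g (Suc k) = {}" by (simp only: fhp_Suc[of S s g k] if_not_P[OF False])
  then have "fh S P g (Suc k) s = 0" unfolding fh_def by simp
  then show ?thesis by (simp only: if_not_P[OF False])
qed

lemma fh_nonneg:
  assumes "\<forall>s\<in>S. \<forall>s'. P s s' \<ge> 0"
  shows "fh S P g k s \<ge> 0"
  unfolding fh_def
proof (intro sum_nonneg prod_nonneg)
  fix ss i assume "ss \<in> first_hit_paths S s g k" "i \<in> {..<k}"
  then have "ss ! i \<in> S" unfolding first_hit_paths_def
    by (auto intro!: subsetD[of "set ss" S] nth_mem)
  then show "P (ss ! i) (ss ! Suc i) \<ge> 0" using assms by auto
qed

lemma fh_partial_le1:
  assumes finS: "finite S" and gS: "g \<in> S"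
    and nn: "\<forall>s\<in>S. \<forall>s'. P s s' \<ge> 0" and st: "\<forall>s\<in>S. (\<Sum>s'\<in>S. P s s') = 1"
  shows "\<forall>s\<in>S. (\<Sum>j<n. fh S P g j s) \<le> 1"
proof (induction n)
  case 0 then show ?case by simp
next
  case (Suc n)
  show ?case
  proof
    fix s assume sS: "s \<in> S"
    have "(\<Sum>j<Suc n. fh S P g j s) = fh S P g 0 s + (\<Sum>j<n. fh S P g (Suc j) s)"
      by (rule sum.lessThan_Suc_shift)
    also have "\<dots> \<le> 1"
    proof (cases "s = g")
      case True then show ?thesis using sS by (simp add: fh_0 fh_Suc finS)
    next
      case False
      have "(\<Sum>j<n. fh S P g (Suc j) s) = (\<Sum>j<n. \<Sum>s'\<in>S. P s s' * fh S P g j s')"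
        using sS False by (simp add: fh_Suc finS)
      also have "\<dots> = (\<Sum>s'\<in>S. P s s' * (\<Sum>j<n. fh S P g j s'))"
        by (subst sum.swap) (simp add: sum_distrib_left)
      also have "\<dots> \<le> (\<Sum>s'\<in>S. P s s' * 1)"
        using Suc.IH nn sS by (intro sum_mono mult_left_mono) auto
      also have "\<dots> = 1" using st sS by simp
      finally show ?thesis using sS False by (simp add: fh_0)
    qed
    finally show "(\<Sum>j<Suc n. fh S P g j s) \<le> 1" .
  qed
qed

lemma fh_erlang: "fh {0..N} (erlang_P N) N k i = (if i \<le> N \<and> k = N - i then 1 else 0)"
proof (induction k arbitrary: i)
  case 0 then show ?case by (auto simp: fh_0)
next
  case (Suc k)
  show ?case
  proof (cases "i < N")
    case True
    have "fh {0..N} (erlang_P N) N (Suc k) i = (\<Sum>s'\<in>{0..N}. erlang_P N i s' * fh {0..N} (erlang_P N) N k s')"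
      using True by (simp add: fh_Suc)
    also have "\<dots> = (\<Sum>s'\<in>{0..N}. if s' = Suc i then fh {0..N} (erlang_P N) N k s' else 0)"
      using True by (intro sum.cong refl) (simp add: erlang_P_def)
    also have "\<dots> = fh {0..N} (erlang_P N) N k (Suc i)"
      using True by (subst sum.delta) auto
    also have "\<dots> = (if Suc i \<le> N \<and> k = N - Suc i then 1 else 0)"
      by (rule Suc.IH)
    also have "(Suc i \<le> N \<and> k = N - Suc i) = (i \<le> N \<and> Suc k = N - i)"
      using True by linarith
    finally show ?thesis .
  next
    case False
    have "fh {0..N} (erlang_P N) N (Suc k) i = 0"
      by (subst fh_Suc) (use False in simp_all)
    moreover have "\<not> (i \<le> N \<and> Suc k = N - i)" using False by linarith
    ultimately show ?thesis by simp
  qed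
qed



definition Gf :: "real \<Rightarrow> real \<Rightarrow> nat \<Rightarrow> real" where
  "Gf r t k = 1 - (\<Sum>n<k. (r*t)^n * exp(-r*t) / fact n)"

lemma hold_prob_const:
  assumes r: "r > 0" and t: "t \<ge> 0" and E: "\<forall>i < length ss - 1. E (ss!i) = r"
  shows "hold_prob E ss t = Gf r t (length ss - 1)"
proof -
  have "PiM {..<length ss - 1} (\<lambda>i. density lborel (exponential_density (E (ss ! i))))
      = PiM {..<length ss - 1} (\<lambda>i. density lborel (exponential_density r))"
    by (rule PiM_cong) (simp_all add: E)
  then show ?thesis
    unfolding hold_prob_def Let_def Gf_def using PiM_exp_sum[OF r t] by simp
qed

lemma reach_eq:
  assumes E: "\<forall>s\<in>S. E s = r" and r: "r > 0" and t: "t \<ge> 0"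
  shows "ctmc_reach S E P s0 g t = (\<Sum>k. fh S P g k s0 * Gf r t k)"
  unfolding ctmc_reach_def fh_def sum_distrib_right
proof (intro suminf_cong sum.cong refl)
  fix k ss assume ss: "ss \<in> first_hit_paths S s0 g k"
  then have len: "length ss - 1 = k" and sub: "set ss \<subseteq> S"
    unfolding first_hit_paths_def by auto
  have "\<forall>i < length ss - 1. E (ss!i) = r"
  proof (intro allI impI)
    fix i assume "i < length ss - 1"
    then have "ss ! i \<in> set ss" by simp
    then show "E (ss ! i) = r" using sub E by blast
  qed
  then have "hold_prob E ss t = Gf r t k" using hold_prob_const[OF r t] len by metis
  then show "(\<Prod>i<k. P (ss ! i) (ss ! Suc i)) * hold_prob E ss t =
         (\<Prod>i<k. P (ss ! i) (ss ! Suc i)) * Gf r t k" by simp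
qed

lemma Gf_le1: "t \<ge> 0 \<Longrightarrow> r > 0 \<Longrightarrow> Gf r t k \<le> 1"
  unfolding Gf_def by (auto intro!: sum_nonneg)

lemma Gf_nonneg: assumes "t \<ge> 0" "r > 0" shows "Gf r t k \<ge> 0"
proof (cases k)
  case 0 then show ?thesis by (simp add: Gf_def)
next
  case (Suc m)
  have "Gf r t k = erlang_CDF m r t"
    using assms Suc unfolding Gf_def erlang_CDF_def by (simp add: lessThan_Suc_atMost)
  then show ?thesis using erlang_CDF_nonneg[OF assms(2)] by simp
qed

lemma d_eq:
  "Gf c t k - Gf 1 t k = (\<Sum>n<k. t ^ n / fact n * (exp (- t) - c ^ n * exp (- c * t)))"
  unfolding Gf_def
  by (simp add: sum_subtractf[symmetric] power_mult_distrib field_simps)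

lemma e_sums:
  fixes c t :: real
  shows "(\<lambda>n. t ^ n / fact n * (exp (- t) - c ^ n * exp (- c * t))) sums 0"
proof -
  have 1: "(\<lambda>n. exp (-t) * (t ^ n / fact n)) sums (exp (-t) * exp t)"
    using sums_mult[OF exp_converges[of t, unfolded scaleR_conv_of_real], of "exp (-t)"]
    by (simp add: divide_inverse mult.commute)
  have 2: "(\<lambda>n. exp (-c*t) * ((c*t) ^ n / fact n)) sums (exp (-c*t) * exp (c*t))"
    using sums_mult[OF exp_converges[of "c*t", unfolded scaleR_conv_of_real], of "exp (-c*t)"]
    by (simp add: divide_inverse mult.commute)
  have "(\<lambda>n. exp (-t) * (t ^ n / fact n) - exp (-c*t) * ((c*t) ^ n / fact n)) sums
        (exp (-t) * exp t - exp (-c*t) * exp (c*t))"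
    by (rule sums_diff[OF 1 2])
  moreover have "exp (-t) * exp t - exp (-c*t) * exp (c*t) = 0"
    by (simp add: exp_minus)
  moreover have "(\<lambda>n. exp (-t) * (t ^ n / fact n) - exp (-c*t) * ((c*t) ^ n / fact n)) =
      (\<lambda>n. t ^ n / fact n * (exp (- t) - c ^ n * exp (- c * t)))"
    by (simp add: fun_eq_iff power_mult_distrib field_simps)
  ultimately show ?thesis by simp
qed

theorem proposition5:
  fixes S :: "'s set" and E :: "'s \<Rightarrow> real" and P :: "'s \<Rightarrow> 's \<Rightarrow> real"
    and s0 g :: 's and \<delta> c t :: real and N :: nat
  assumes finS: "finite S" and s0S: "s0 \<in> S" and gS: "g \<in> S"
    and P_nonneg: "\<forall>s\<in>S. \<forall>s'. P s s' \<ge> 0"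
    and P_closed: "\<forall>s\<in>S. \<forall>s'. s' \<notin> S \<longrightarrow> P s s' = 0"
    and P_stoch: "\<forall>s\<in>S. (\<Sum>s'\<in>S. P s s') = 1"
    and E_one: "\<forall>s\<in>S. E s = 1"
    and g_absorbing: "P g g = 1"
    and g_unique: "\<forall>s\<in>S. P s s = 1 \<longrightarrow> s = g"
    and delta_pos: "\<delta> > 0"
    and c_def: "c = exp \<delta>"
    and t_nonneg: "t \<ge> 0"
    and N_def: "N = nat \<lceil>(exp \<delta> - 1) * t / \<delta>\<rceil>"
  shows "\<bar>ctmc_reach S (scale_rates c E) P s0 g t - ctmc_reach S E P s0 g t\<bar> \<le> erlang_diff c t N
         \<and> erlang_diff c t N = (\<Sum>k<N. t ^ k / fact k * (exp (- t) - c ^ k * exp (- c * t)))"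
proof -
  have c1: "c > 1" using c_def delta_pos by simp
  then have c0: "c > 0" by simp
  define p where "p k = fh S P g k s0" for k
  define a where "a k = Gf 1 t k" for k
  define b where "b k = Gf c t k" for k
  define e where "e n = t ^ n / fact n * (exp (- t) - c ^ n * exp (- c * t))" for n
  define d where "d k = (\<Sum>n<k. e n)" for k
  have d_ba: "b k - a k = d k" for k
    unfolding a_def b_def d_def e_def by (rule d_eq)
  have p_nn: "p k \<ge> 0" for k unfolding p_def by (rule fh_nonneg[OF P_nonneg])
  have p_part: "(\<Sum>j<n. p j) \<le> 1" for n
    using fh_partial_le1[OF finS gS P_nonneg P_stoch] s0S unfolding p_def by blast
  have p_sum: "summable p" by (rule summableI_nonneg_bounded[OF p_nn p_part])
  have p_le1: "suminf p \<le> 1" by (rule suminf_le_const[OF p_sum p_part])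
  have a01: "0 \<le> a k \<and> a k \<le> 1" for k
    unfolding a_def using Gf_nonneg[OF t_nonneg, of 1] Gf_le1[OF t_nonneg, of 1] by simp
  have b01: "0 \<le> b k \<and> b k \<le> 1" for k
    unfolding b_def using Gf_nonneg[OF t_nonneg c0] Gf_le1[OF t_nonneg c0] by simp
  have pa_sum: "summable (\<lambda>k. p k * a k)"
    by (rule summable_comparison_test'[OF p_sum]) (use a01 p_nn in \<open>auto simp: abs_mult intro: mult_left_le\<close>)
  have pb_sum: "summable (\<lambda>k. p k * b k)"
    by (rule summable_comparison_test'[OF p_sum]) (use b01 p_nn in \<open>auto simp: abs_mult intro: mult_left_le\<close>)
  have reachE: "ctmc_reach S E P s0 g t = (\<Sum>k. p k * a k)"
    unfolding p_def a_def by (rule reach_eq[OF E_one _ t_nonneg]) simp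
  have reachC: "ctmc_reach S (scale_rates c E) P s0 g t = (\<Sum>k. p k * b k)"
    unfolding p_def b_def by (rule reach_eq[OF _ c0 t_nonneg]) (simp add: scale_rates_def E_one)

  define x where "x = (exp \<delta> - 1) * t / \<delta>"
  have x_nn: "x \<ge> 0" unfolding x_def using delta_pos t_nonneg by simp
  have cn: "c ^ n * exp (- c * t) = exp (real n * \<delta> - c * t)" for n
    unfolding c_def by (simp add: exp_diff exp_of_nat_mult[symmetric] divide_inverse exp_minus)
  have e_pos: "e n \<ge> 0" if "n < N" for n
  proof -
    have "int n < \<lceil>x\<rceil>" using that unfolding N_def x_def by linarith
    then have "real n < x" by (simp add: less_ceiling_iff)
    then have "real n * \<delta> < (c - 1) * t" unfolding x_def c_def using delta_pos
      by (simp add: field_simps)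
    then have "exp (real n * \<delta> - c * t) \<le> exp (- t)" by (simp add: algebra_simps)
    then show ?thesis unfolding e_def cn using t_nonneg by (intro mult_nonneg_nonneg) auto
  qed
  have e_neg: "e n \<le> 0" if "n \<ge> N" for n
  proof -
    have "\<lceil>x\<rceil> \<le> int n" using that x_nn unfolding N_def x_def by linarith
    then have "x \<le> real n" by (simp add: ceiling_le_iff)
    then have "(c - 1) * t \<le> real n * \<delta>" unfolding x_def c_def using delta_pos
      by (simp add: field_simps)
    then have "exp (- t) \<le> exp (real n * \<delta> - c * t)" by (simp add: algebra_simps)
    then show ?thesis unfolding e_def cn using t_nonneg by (intro mult_nonneg_nonpos) auto
  qed
  have dN_nn: "d N \<ge> 0" unfolding d_def using e_pos by (intro sum_nonneg) auto
  have d_le: "d k \<le> d N" for k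
  proof (cases "k \<le> N")
    case True
    have "d N = d k + (\<Sum>n\<in>{k..<N}. e n)"
      unfolding d_def using True by (simp add: lessThan_atLeast0 sum.atLeastLessThan_concat)
    moreover have "(\<Sum>n\<in>{k..<N}. e n) \<ge> 0" using e_pos by (intro sum_nonneg) auto
    ultimately show ?thesis by simp
  next
    case False
    have "d k = d N + (\<Sum>n\<in>{N..<k}. e n)"
      unfolding d_def using False by (simp add: lessThan_atLeast0 sum.atLeastLessThan_concat)
    moreover have "(\<Sum>n\<in>{N..<k}. e n) \<le> 0" using e_neg by (intro sum_nonpos) auto
    ultimately show ?thesis by simp
  qed
  have d_nn: "d k \<ge> 0" for k
  proof (cases "k \<le> N")
    case True
    then show ?thesis unfolding d_def using e_pos by (intro sum_nonneg) auto
  next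
    case False
    have es: "e sums 0" unfolding e_def by (rule e_sums)
    then have "summable e" by (rule sums_summable)
    then have "suminf e = (\<Sum>n. e (n + k)) + d k"
      unfolding d_def by (rule suminf_split_initial_segment)
    moreover have "suminf e = 0" using es by (rule sums_unique[symmetric])
    moreover have "(\<Sum>n. e (n + k)) \<le> (\<Sum>n. (0::real))"
    proof (rule suminf_le)
      show "summable (\<lambda>n. e (n + k))" using \<open>summable e\<close> by (rule summable_ignore_initial_segment)
      show "summable (\<lambda>n. 0::real)" by simp
      show "e (n + k) \<le> 0" for n using False by (intro e_neg) simp
    qed
    ultimately show ?thesis by simp
  qed

  have diff: "ctmc_reach S (scale_rates c E) P s0 g t - ctmc_reach S E P s0 g t = (\<Sum>k. p k * d k)"
    unfolding reachE reachC suminf_diff[OF pb_sum pa_sum] d_ba[symmetric]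
    by (simp add: right_diff_distrib)
  have pd_sum: "summable (\<lambda>k. p k * d k)"
    using summable_diff[OF pb_sum pa_sum] by (simp add: d_ba[symmetric] right_diff_distrib)
  have "(\<Sum>k. p k * d k) \<le> (\<Sum>k. p k * d N)"
  proof (rule suminf_le)
    show "summable (\<lambda>k. p k * d k)" by (rule pd_sum)
    show "summable (\<lambda>k. p k * d N)" by (rule summable_mult2[OF p_sum])
    show "p k * d k \<le> p k * d N" for k by (rule mult_left_mono[OF d_le p_nn])
  qed
  also have "\<dots> = suminf p * d N" by (rule suminf_mult2[OF p_sum, symmetric])
  also have "\<dots> \<le> 1 * d N" by (intro mult_right_mono p_le1 dN_nn)
  finally have up: "(\<Sum>k. p k * d k) \<le> d N" by simp
  have lo: "(\<Sum>k. p k * d k) \<ge> 0"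
    by (rule suminf_nonneg[OF pd_sum]) (rule mult_nonneg_nonneg[OF p_nn d_nn])

  have fhE: "fh {0..N} (erlang_P N) N k 0 = (if k = N then 1 else 0)" for k
    by (simp add: fh_erlang)
  have erl_reach: "ctmc_reach {0..N} E' (erlang_P N) 0 N t = Gf r t N"
    if "\<forall>s\<in>{0..N}. E' s = r" "r > 0" for E' r
  proof -
    have "ctmc_reach {0..N} E' (erlang_P N) 0 N t = (\<Sum>k. fh {0..N} (erlang_P N) N k 0 * Gf r t k)"
      by (rule reach_eq[OF that t_nonneg])
    also have "\<dots> = (\<Sum>k. if k = N then Gf r t k else 0)"
      unfolding fhE by (intro suminf_cong) simp
    also have "\<dots> = Gf r t N" by (rule sums_unique[symmetric, OF sums_single])
    finally show ?thesis .
  qed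
  have ed: "erlang_diff c t N = d N"
  proof -
    have "erlang_diff c t N = \<bar>a N - b N\<bar>"
      unfolding erlang_diff_def a_def b_def
      using erl_reach[of "\<lambda>_. 1" 1] erl_reach[of "scale_rates c (\<lambda>_. 1)" c] c0
      by (simp add: scale_rates_def)
    also have "\<dots> = d N" using d_ba[of N] dN_nn by simp
    finally show ?thesis .
  qed
  show ?thesis
  proof
    show "\<bar>ctmc_reach S (scale_rates c E) P s0 g t - ctmc_reach S E P s0 g t\<bar> \<le> erlang_diff c t N"
      unfolding diff ed using up lo by simp
    show "erlang_diff c t N = (\<Sum>k<N. t ^ k / fact k * (exp (- t) - c ^ k * exp (- c * t)))"
      unfolding ed d_def e_def ..
  qed
qed

end
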